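(* Let $\mathcal{P}$ be the PAG over the observed variables $\mathbf{O}$ and let $(X,Y)$ be an ordered pair of target variables. Then $X$ has no causal effect on $Y$ if there exist a subset $\mathbf{Z}\subseteq\mathrm{MB}(X)$ with $\mathbf{Z}\cap\mathrm{PossDe}(X,\mathcal{P})=\emptyset$ and a variable $S\in\mathrm{MB}(X)\setminus(\{Y\}\cup\mathrm{Ch}(X,\mathcal{P}))$ such that at least one of the following holds: (i) $X\perp\!\!\!\perp Y\mid\mathbf{Z}$; or (ii) $S\not\perp\!\!\!\perp X\mid\mathbf{Z}$ and $S\perp\!\!\!\perp Y\mid\mathbf{Z}$.
   Context: Setting: a structural causal model over $\mathbf{V}=\mathbf{O}\cup\mathbf{U}$ ($\mathbf{O}$ observed, $\mathbf{U}$ latent) with acyclic causal DAG $D$, each $V_i=f_i(\mathrm{Pa}(V_i,D),\varepsilon_i)$ with independent errors, satisfying causal Markov and faithfulness; conditional independences ($\perp\!\!\!\perp$) among observed variables coincide with m-separations in the MAG over $\mathbf{O}$ obtained by marginalizing latents. The PAG $\mathcal{P}$ represents its Markov equivalence class (marks tail/arrowhead if so in all equivalent MAGs, circle $\circ$ otherwise). $\mathrm{Ch}(X,\mathcal{P})$ is the set of $V$ with $X\to V$ in $\mathcal{P}$. A possibly directed path from $A$ to $B$ is a path on which no edge has an arrowhead at the mark nearer to $A$; $\mathrm{PossDe}(A,\mathcal{P})$ is the set of possible descendants of $A$. $\mathrm{MB}(X)$ is the Markov blanket of $X$ (smallest set rendering $X$ independent of all other observed variables; in the MAG: parents, children, children's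 parents, districts of $X$ and of its children (vertices reachable by bidirected edges only), and parents of those district vertices). "$X$ has no causal effect on $Y$" means the total causal effect is zero, i.e. $f(y\mid do(x))$ does not depend on $x$ (no directed path from $X$ to $Y$ in $D$). *)

theory Defs
  imports Main
begin

record 'v mgraph =
  verts  :: "'v set"
  dedges :: "('v \<times> 'v) set"   (* (a,b) means a \<rightarrow> b *)
  bedges :: "('v \<times> 'v) set"   (* (a,b) means a \<leftrightarrow> b *)

definition adj :: "'v mgraph \<Rightarrow> 'v \<Rightarrow> 'v \<Rightarrow> bool" where
  "adj G a b \<longleftrightarrow> (a,b) \<in> dedges G \<or> (b,a) \<in> dedges G \<or> (a,b) \<in> bedges G \<or> (b,a) \<in> bedges G"

text \<open>into G a b: the edge between a and b has an arrowhead at b.\<close>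
definition into :: "'v mgraph \<Rightarrow> 'v \<Rightarrow> 'v \<Rightarrow> bool" where
  "into G a b \<longleftrightarrow> (a,b) \<in> dedges G \<or> (a,b) \<in> bedges G \<or> (b,a) \<in> bedges G"

definition anc :: "'v mgraph \<Rightarrow> 'v \<Rightarrow> 'v \<Rightarrow> bool" where
  "anc G a b \<longleftrightarrow> (a,b) \<in> (dedges G)\<^sup>*"

definition is_path :: "'v mgraph \<Rightarrow> 'v list \<Rightarrow> bool" where
  "is_path G p \<longleftrightarrow> p \<noteq> [] \<and> distinct p \<and> set p \<subseteq> verts G \<and>
     (\<forall>i. Suc i < length p \<longrightarrow> adj G (p!i) (p!Suc i))"

definition collider :: "'v mgraph \<Rightarrow> 'v list \<Rightarrow> nat \<Rightarrow> bool" where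
  "collider G p i \<longleftrightarrow> 0 < i \<and> Suc i < length p \<and>
     into G (p!(i-1)) (p!i) \<and> into G (p!Suc i) (p!i)"

definition m_connecting :: "'v mgraph \<Rightarrow> 'v set \<Rightarrow> 'v list \<Rightarrow> bool" where
  "m_connecting G Z p \<longleftrightarrow> is_path G p \<and> hd p \<notin> Z \<and> last p \<notin> Z \<and>
     (\<forall>i. 0 < i \<and> Suc i < length p \<longrightarrow>
        (collider G p i \<longrightarrow> (\<exists>z\<in>Z. anc G (p!i) z)) \<and>
        (\<not> collider G p i \<longrightarrow> p!i \<notin> Z))"

definition msep :: "'v mgraph \<Rightarrow> 'v \<Rightarrow> 'v \<Rightarrow> 'v set \<Rightarrow> bool" where
  "msep G a b Z \<longleftrightarrow> \<not> (\<exists>p. m_connecting G Z p \<and> hd p = a \<and> last p = b)"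

definition dag :: "'v set \<Rightarrow> ('v \<times> 'v) set \<Rightarrow> bool" where
  "dag V E \<longleftrightarrow> finite V \<and> E \<subseteq> V \<times> V \<and> (\<forall>v. (v,v) \<notin> E\<^sup>+)"

definition dag_graph :: "'v set \<Rightarrow> ('v \<times> 'v) set \<Rightarrow> 'v mgraph" where
  "dag_graph V E = \<lparr>verts = V, dedges = E, bedges = {}\<rparr>"

text \<open>Inducing path in D between a and b relative to the latent set V - Ob
  (no selection variables).\<close>
definition inducing_path :: "'v set \<Rightarrow> ('v \<times> 'v) set \<Rightarrow> 'v set \<Rightarrow> 'v \<Rightarrow> 'v \<Rightarrow> 'v list \<Rightarrow> bool" where
  "inducing_path V E Ob a b p \<longleftrightarrow> is_path (dag_graph V E) p \<and> hd p = a \<and> last p = b \<and>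
     (\<forall>i. 0 < i \<and> Suc i < length p \<longrightarrow> p!i \<notin> Ob \<or> collider (dag_graph V E) p i) \<and>
     (\<forall>i. collider (dag_graph V E) p i \<longrightarrow>
          anc (dag_graph V E) (p!i) a \<or> anc (dag_graph V E) (p!i) b)"

definition mag_of :: "'v set \<Rightarrow> ('v \<times> 'v) set \<Rightarrow> 'v set \<Rightarrow> 'v mgraph" where
  "mag_of V E Ob = \<lparr>verts = Ob,
     dedges = {(a,b). a \<in> Ob \<and> b \<in> Ob \<and> a \<noteq> b \<and> (\<exists>p. inducing_path V E Ob a b p) \<and> (a,b) \<in> E\<^sup>*},
     bedges = {(a,b). a \<in> Ob \<and> b \<in> Ob \<and> a \<noteq> b \<and> (\<exists>p. inducing_path V E Ob a b p) \<and>
                      (a,b) \<notin> E\<^sup>* \<and> (b,a) \<notin> E\<^sup>*}\<rparr>"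

definition cond_indep :: "'v set \<Rightarrow> ('v \<times> 'v) set \<Rightarrow> 'v set \<Rightarrow> 'v \<Rightarrow> 'v \<Rightarrow> 'v set \<Rightarrow> bool" where
  "cond_indep V E Ob a b Z \<longleftrightarrow> msep (mag_of V E Ob) a b Z"

definition is_mag :: "'v set \<Rightarrow> 'v mgraph \<Rightarrow> bool" where
  "is_mag Ob G \<longleftrightarrow> verts G = Ob \<and> dedges G \<subseteq> Ob \<times> Ob \<and> bedges G \<subseteq> Ob \<times> Ob \<and>
     sym (bedges G) \<and> (\<forall>a. (a,a) \<notin> bedges G) \<and>
     (\<forall>a b. (a,b) \<in> dedges G \<longrightarrow> (a,b) \<notin> bedges G) \<and>
     (\<forall>a. (a,a) \<notin> (dedges G)\<^sup>+) \<and>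
     (\<forall>a b. (a,b) \<in> bedges G \<longrightarrow> \<not> anc G a b) \<and>
     (\<forall>a\<in>Ob. \<forall>b\<in>Ob. a \<noteq> b \<and> \<not> adj G a b \<longrightarrow> (\<exists>Z \<subseteq> Ob - {a,b}. msep G a b Z))"

definition markov_equiv :: "'v set \<Rightarrow> 'v mgraph \<Rightarrow> 'v mgraph \<Rightarrow> bool" where
  "markov_equiv Ob G H \<longleftrightarrow>
     (\<forall>a\<in>Ob. \<forall>b\<in>Ob. \<forall>Z. Z \<subseteq> Ob - {a,b} \<longrightarrow> (msep G a b Z \<longleftrightarrow> msep H a b Z))"

definition mec :: "'v set \<Rightarrow> 'v mgraph \<Rightarrow> 'v mgraph set" where
  "mec Ob G = {H. is_mag Ob H \<and> markov_equiv Ob G H}"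

datatype mark = Tail | Arrowhead | Circle

text \<open>A PAG: P a b = Some m iff a and b are adjacent and the edge has mark m at b.\<close>
type_synonym 'v pag = "'v \<Rightarrow> 'v \<Rightarrow> mark option"

definition pag_of :: "'v set \<Rightarrow> ('v \<times> 'v) set \<Rightarrow> 'v set \<Rightarrow> 'v pag" where
  "pag_of V E Ob a b =
     (let M = mag_of V E Ob; C = mec Ob M in
      if \<not> adj M a b then None
      else if (\<forall>H\<in>C. into H a b) then Some Arrowhead
      else if (\<forall>H\<in>C. \<not> into H a b) then Some Tail
      else Some Circle)"

definition pag_children :: "'v pag \<Rightarrow> 'v \<Rightarrow> 'v set" where
  "pag_children P X = {W. P W X = Some Tail \<and> P X W = Some Arrowhead}"

definition poss_step :: "'v pag \<Rightarrow> 'v \<Rightarrow> 'v \<Rightarrow> bool" where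
  "poss_step P a b \<longleftrightarrow> P a b \<noteq> None \<and> P b a \<noteq> Some Arrowhead"

definition poss_de :: "'v pag \<Rightarrow> 'v \<Rightarrow> 'v set" where
  "poss_de P X = {W. (X,W) \<in> {(a,b). poss_step P a b}\<^sup>*}"

definition parents :: "'v mgraph \<Rightarrow> 'v \<Rightarrow> 'v set" where
  "parents G v = {u. (u,v) \<in> dedges G}"

definition children :: "'v mgraph \<Rightarrow> 'v \<Rightarrow> 'v set" where
  "children G v = {w. (v,w) \<in> dedges G}"

definition district :: "'v mgraph \<Rightarrow> 'v \<Rightarrow> 'v set" where
  "district G v = {w. (v,w) \<in> (bedges G)\<^sup>*}"

definition markov_blanket :: "'v mgraph \<Rightarrow> 'v \<Rightarrow> 'v set" where
  "markov_blanket G X =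
     (let D = district G X \<union> (\<Union>C\<in>children G X. district G C) in
      (parents G X \<union> children G X \<union> (\<Union>C\<in>children G X. parents G C) \<union> D \<union>
       (\<Union>W\<in>D. parents G W)) - {X})"

end

theory Submission
  imports Defs
begin


definition walk :: "'v mgraph \<Rightarrow> 'v list \<Rightarrow> bool" where
  "walk G p \<longleftrightarrow> p \<noteq> [] \<and> (\<forall>i. Suc i < length p \<longrightarrow> adj G (p!i) (p!Suc i))"

lemma adj_sym: "adj G a b = adj G b a"
  unfolding adj_def by auto

lemma not_into_dedge: "\<not> into G x y \<Longrightarrow> adj G x y \<Longrightarrow> (y,x) \<in> dedges G"
  unfolding adj_def into_def by auto

lemma dedge_into: "(x,y) \<in> dedges G \<Longrightarrow> into G x y"
  unfolding into_def by auto

lemma path_walk: "is_path G p \<Longrightarrow> walk G p"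
  unfolding is_path_def walk_def by auto

lemma follow_fwd:
  assumes "walk G p"
  shows "Suc k < length p \<Longrightarrow> (p!k, p!Suc k) \<in> dedges G \<Longrightarrow>
    \<exists>m. k < m \<and> m < length p \<and> (p!k, p!m) \<in> (dedges G)\<^sup>+ \<and> (Suc m = length p \<or> collider G p m)"
proof (induction "length p - Suc k" arbitrary: k rule: less_induct)
  case less
  show ?case
  proof (cases "Suc (Suc k) = length p \<or> collider G p (Suc k)")
    case True
    then show ?thesis using less.prems by (intro exI[of _ "Suc k"]) auto
  next
    case False
    hence nc: "\<not> collider G p (Suc k)" and lt: "Suc (Suc k) < length p" using less.prems by auto
    have "into G (p!k) (p!Suc k)" using less.prems(2) by (rule dedge_into)
    hence "\<not> into G (p!Suc (Suc k)) (p!Suc k)" using nc lt unfolding collider_def by auto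
    moreover have "adj G (p!Suc (Suc k)) (p!Suc k)" using assms lt unfolding walk_def
      by (subst adj_sym) auto
    ultimately have e: "(p!Suc k, p!Suc (Suc k)) \<in> dedges G" by (rule not_into_dedge)
    obtain m where m: "Suc k < m" "m < length p" "(p!Suc k, p!m) \<in> (dedges G)\<^sup>+"
        "Suc m = length p \<or> collider G p m"
    proof -
      have "length p - Suc (Suc k) < length p - Suc k" using lt by simp
      then show ?thesis using less.hyps[of "Suc k"] lt e that by blast
    qed
    have "(p!k, p!m) \<in> (dedges G)\<^sup>+" using less.prems(2) m(3) by auto
    then show ?thesis using m by (intro exI[of _ m]) auto
  qed
qed

lemma follow_bwd:
  assumes "walk G p"
  shows "k < length p \<Longrightarrow> 0 < k \<Longrightarrow> (p!k, p!(k-1)) \<in> dedges G \<Longrightarrow>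
    \<exists>m<k. (p!k, p!m) \<in> (dedges G)\<^sup>+ \<and> (m = 0 \<or> collider G p m)"
proof (induction k)
  case 0
  then show ?case by simp
next
  case (Suc j)
  show ?case
  proof (cases "j = 0 \<or> collider G p j")
    case True
    then show ?thesis using Suc.prems by (intro exI[of _ j]) auto
  next
    case False
    hence nc: "\<not> collider G p j" and j0: "0 < j" by auto
    have "into G (p!Suc j) (p!j)" using Suc.prems(3) by (intro dedge_into) simp
    hence "\<not> into G (p!(j-1)) (p!j)" using nc j0 Suc.prems unfolding collider_def by auto
    moreover have "adj G (p!(j-1)) (p!j)" using assms Suc.prems j0 unfolding walk_def
      by (metis Suc_diff_1 Suc_lessD)
    ultimately have e: "(p!j, p!(j-1)) \<in> dedges G" by (rule not_into_dedge)
    obtain m where m: "m < j" "(p!j, p!m) \<in> (dedges G)\<^sup>+" "m = 0 \<or> collider G p m"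
      using Suc.IH Suc.prems j0 e by auto
    have "(p!Suc j, p!m) \<in> (dedges G)\<^sup>+" using Suc.prems(3) m(2) by auto
    then show ?thesis using m by (intro exI[of _ m]) auto
  qed
qed

lemma trancl_closed:
  assumes "(x,y) \<in> r\<^sup>+" "y \<in> A" "\<And>x y. (x,y) \<in> r \<Longrightarrow> y \<in> A \<Longrightarrow> x \<in> A"
  shows "x \<in> A"
  using assms(1,2) by (induction rule: converse_trancl_induct) (auto intro: assms(3))

lemma rtrancl_closed:
  assumes "(x,y) \<in> r\<^sup>*" "y \<in> A" "\<And>x y. (x,y) \<in> r \<Longrightarrow> y \<in> A \<Longrightarrow> x \<in> A"
  shows "x \<in> A"
  using assms(1,2) by (induction rule: converse_rtrancl_induct) (auto intro: assms(3))

lemma anc_all: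
  assumes w: "walk G p" and h: "hd p \<in> A" and l: "last p \<in> A"
    and c: "\<And>i. collider G p i \<Longrightarrow> p!i \<in> A"
    and cl: "\<And>x y. (x,y) \<in> dedges G \<Longrightarrow> y \<in> A \<Longrightarrow> x \<in> A"
    and i: "i < length p"
  shows "p!i \<in> A"
proof -
  have ne: "p \<noteq> []" using w unfolding walk_def by auto
  have ends: "p!m \<in> A" if "m = 0 \<or> Suc m = length p \<or> collider G p m" "m < length p" for m
  proof -
    have "m = 0 \<or> m = length p - 1 \<or> collider G p m" using that by auto
    then show ?thesis using h l c ne by (auto simp: hd_conv_nth last_conv_nth)
  qed
  show ?thesis
  proof (cases "i = 0 \<or> Suc i = length p \<or> collider G p i")
    case True then show ?thesis using ends i by auto
  next
    case False
    hence i0: "0 < i" "Suc i < length p" "\<not> collider G p i" using i by auto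
    hence "\<not> into G (p!(i-1)) (p!i) \<or> \<not> into G (p!Suc i) (p!i)" unfolding collider_def by auto
    then show ?thesis
    proof
      assume "\<not> into G (p!(i-1)) (p!i)"
      moreover have "adj G (p!(i-1)) (p!i)" using w i0 unfolding walk_def
        by (metis Suc_diff_1 Suc_lessD)
      ultimately have "(p!i, p!(i-1)) \<in> dedges G" by (intro not_into_dedge)
      then obtain m where "m < i" "(p!i, p!m) \<in> (dedges G)\<^sup>+" "m = 0 \<or> collider G p m"
        using follow_bwd[OF w, of i] i0 by auto
      then show ?thesis using ends[of m] i by (auto intro: trancl_closed cl)
    next
      assume "\<not> into G (p!Suc i) (p!i)"
      moreover have "adj G (p!Suc i) (p!i)" using w i0 unfolding walk_def
        by (subst adj_sym) auto
      ultimately have "(p!i, p!Suc i) \<in> dedges G" by (intro not_into_dedge)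
      then obtain m where "i < m" "m < length p" "(p!i, p!m) \<in> (dedges G)\<^sup>+" "Suc m = length p \<or> collider G p m"
        using follow_fwd[OF w, of i] i0 by auto
      then show ?thesis using ends[of m] by (auto intro: trancl_closed cl)
    qed
  qed
qed



lemma dg_simps[simp]: "verts (dag_graph V E) = V" "dedges (dag_graph V E) = E" "bedges (dag_graph V E) = {}"
  by (simp_all add: dag_graph_def)

lemma adj_dg[simp]: "adj (dag_graph V E) x y \<longleftrightarrow> (x,y)\<in>E \<or> (y,x)\<in>E"
  by (auto simp: adj_def)
lemma into_dg[simp]: "into (dag_graph V E) x y \<longleftrightarrow> (x,y)\<in>E"
  by (auto simp: into_def)
lemma anc_dg[simp]: "anc (dag_graph V E) x y \<longleftrightarrow> (x,y)\<in>E\<^sup>*"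
  by (auto simp: anc_def)

lemma dag_acyc: "dag V E \<Longrightarrow> (x,y)\<in>E\<^sup>+ \<Longrightarrow> (y,x)\<in>E\<^sup>* \<Longrightarrow> False"
  unfolding dag_def by (meson trancl_rtrancl_trancl)

lemma collider_rev: "collider G (rev p) i \<longleftrightarrow> collider G p (length p - 1 - i)"
proof (cases "0 < i \<and> Suc i < length p")
  case True
  define j where "j = length p - 1 - i"
  have j: "0 < j" "Suc j < length p" "j - 1 = length p - Suc (Suc i)" "Suc j = length p - i"
    using True by (auto simp: j_def)
  have "rev p ! (i-1) = p ! Suc j" "rev p ! i = p ! j" "rev p ! Suc i = p ! (j - 1)"
    using True j by (auto simp: rev_nth j_def Suc_diff_Suc)
  then show ?thesis using True j unfolding collider_def j_def[symmetric] by auto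
next
  case False
  then show ?thesis unfolding collider_def by auto
qed

lemma is_path_rev: "is_path G p \<Longrightarrow> is_path G (rev p)"
  unfolding is_path_def
proof (intro conjI allI impI; (elim conjE)?)
  fix i assume a: "\<forall>i. Suc i < length p \<longrightarrow> adj G (p ! i) (p ! Suc i)" "Suc i < length (rev p)"
  define j where "j = length p - Suc (Suc i)"
  have "Suc j < length p" "rev p ! i = p ! Suc j" "rev p ! Suc i = p ! j"
    using a(2) by (auto simp: rev_nth j_def Suc_diff_Suc)
  then show "adj G (rev p ! i) (rev p ! Suc i)" using a(1) adj_sym by metis
qed auto

lemma inducing_rev:
  assumes "inducing_path V E Ob a b p"
  shows "inducing_path V E Ob b a (rev p)"
proof -
  have p: "is_path (dag_graph V E) p" "hd p = a" "last p = b"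
    "\<And>i. 0 < i \<and> Suc i < length p \<Longrightarrow> p!i \<notin> Ob \<or> collider (dag_graph V E) p i"
    "\<And>i. collider (dag_graph V E) p i \<Longrightarrow> anc (dag_graph V E) (p!i) a \<or> anc (dag_graph V E) (p!i) b"
    using assms unfolding inducing_path_def by blast+
  have ne: "p \<noteq> []" using p(1) unfolding is_path_def by auto
  show ?thesis unfolding inducing_path_def
  proof (intro conjI allI impI)
    show "is_path (dag_graph V E) (rev p)" using p(1) by (rule is_path_rev)
    show "hd (rev p) = b" using p ne by (simp add: hd_rev)
    show "last (rev p) = a" using p ne by (simp add: last_rev)
  next
    fix i assume i: "0 < i \<and> Suc i < length (rev p)"
    have "rev p ! i = p ! (length p - 1 - i)" using i by (simp add: rev_nth)
    moreover have "0 < length p - 1 - i \<and> Suc (length p - 1 - i) < length p" using i by auto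
    ultimately show "rev p ! i \<notin> Ob \<or> collider (dag_graph V E) (rev p) i"
      using p(4) collider_rev by metis
  next
    fix i assume "collider (dag_graph V E) (rev p) i"
    hence c: "collider (dag_graph V E) p (length p - 1 - i)" "i < length p"
      by (simp_all add: collider_rev, auto simp: collider_def)
    have "rev p ! i = p ! (length p - 1 - i)" using c by (simp add: rev_nth)
    then show "anc (dag_graph V E) (rev p ! i) b \<or> anc (dag_graph V E) (rev p ! i) a"
      using p(5)[OF c(1)] by auto
  qed
qed

lemma inducing_out:
  assumes dag: "dag V E" and ip: "inducing_path V E Ob a b p" and len: "2 \<le> length p"
    and e: "(b, p!(length p - 2)) \<in> E"
  shows "(b,a) \<in> E\<^sup>*"
proof -
  let ?D = "dag_graph V E"
  have w: "walk ?D p" using ip unfolding inducing_path_def by (auto intro: path_walk)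
  have l: "last p = b" "hd p = a" using ip unfolding inducing_path_def by auto
  have "p \<noteq> []" using len by auto
  hence lb: "p!(length p - 1) = b" using l by (simp add: last_conv_nth)
  have "length p - 1 - 1 = length p - 2" by simp
  hence e2: "(p!(length p - 1), p!(length p - 1 - 1)) \<in> dedges ?D" using e lb by simp
  have l1: "length p - 1 < length p" "0 < length p - 1" using len by auto
  obtain m where m: "m < length p - 1" "(p!(length p - 1), p!m) \<in> (dedges ?D)\<^sup>+" "m = 0 \<or> collider ?D p m"
    using follow_bwd[OF w l1 e2] by blast
  hence bm: "(b, p!m) \<in> E\<^sup>+" using lb by simp
  from m(3) show ?thesis
  proof
    assume "m = 0" then show ?thesis using bm l \<open>p \<noteq> []\<close> by (simp add: hd_conv_nth)
  next
    assume "collider ?D p m"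
    hence "(p!m, a) \<in> E\<^sup>* \<or> (p!m, b) \<in> E\<^sup>*" using ip unfolding inducing_path_def by auto
    then show ?thesis using bm dag_acyc[OF dag] by (meson trancl_into_rtrancl rtrancl_trans)
  qed
qed

lemma inducing_len: "inducing_path V E Ob a b p \<Longrightarrow> a \<noteq> b \<Longrightarrow> 2 \<le> length p"
  unfolding inducing_path_def is_path_def
  by (cases p; cases "tl p"; auto)

lemma inducing_into_last:
  assumes dag: "dag V E" and ip: "inducing_path V E Ob a b p" and ab: "a \<noteq> b" and nba: "(b,a) \<notin> E\<^sup>*"
  shows "(p!(length p - 2), p!(length p - 1)) \<in> E"
proof -
  have len: "2 \<le> length p" using inducing_len[OF ip ab] .
  have "adj (dag_graph V E) (p!(length p - 2)) (p!Suc (length p - 2))"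
    using ip len unfolding inducing_path_def is_path_def by auto
  moreover have "Suc (length p - 2) = length p - 1" using len by simp
  moreover have "p \<noteq> []" using len by auto
  hence "p!(length p - 1) = b" using ip unfolding inducing_path_def by (simp add: last_conv_nth)
  hence "(p!(length p - 1), p!(length p - 2)) \<notin> E"
    using inducing_out[OF dag ip len] nba by auto
  ultimately show ?thesis by auto
qed

lemma inducing_into_first:
  assumes dag: "dag V E" and ip: "inducing_path V E Ob a b p" and ab: "a \<noteq> b" and nab: "(a,b) \<notin> E\<^sup>*"
  shows "(p!1, p!0) \<in> E"
proof -
  have len: "2 \<le> length p" using inducing_len[OF ip ab] .
  have "(rev p!(length p - 2), rev p!(length p - 1)) \<in> E"
    using inducing_into_last[OF dag inducing_rev[OF ip]] ab nab by auto
  moreover have "rev p!(length p - 2) = p!1" "rev p!(length p - 1) = p!0" using len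
    by (auto simp: rev_nth)
  ultimately show ?thesis by simp
qed



definition pre_ind :: "'v set \<Rightarrow> ('v \<times> 'v) set \<Rightarrow> 'v set \<Rightarrow> 'v \<Rightarrow> 'v \<Rightarrow> 'v list \<Rightarrow> bool" where
  "pre_ind V E Ob a b w \<longleftrightarrow> walk (dag_graph V E) w \<and> set w \<subseteq> V \<and> hd w = a \<and> last w = b \<and>
     (\<forall>i. 0 < i \<and> Suc i < length w \<longrightarrow> w!i \<notin> Ob \<or> collider (dag_graph V E) w i) \<and>
     (\<forall>i. collider (dag_graph V E) w i \<longrightarrow> (w!i, a) \<in> E\<^sup>* \<or> (w!i, b) \<in> E\<^sup>*)"

lemma collider_eqI:
  assumes "0 < k" "Suc k < length q" "0 < k'" "Suc k' < length w"
    "q!(k-1) = w!(k'-1)" "q!k = w!k'" "q!Suc k = w!Suc k'"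
  shows "collider G q k \<longleftrightarrow> collider G w k'"
  using assms unfolding collider_def by auto

lemma collider_D: "collider (dag_graph V E) q k \<longleftrightarrow> 0 < k \<and> Suc k < length q \<and> (q!(k-1), q!k) \<in> E \<and> (q!Suc k, q!k) \<in> E"
  unfolding collider_def by simp

lemma shorten:
  assumes dag: "dag V E"
  shows "pre_ind V E Ob a b w \<Longrightarrow> \<exists>p. inducing_path V E Ob a b p"
proof (induction "length w" arbitrary: w rule: less_induct)
  case less
  let ?D = "dag_graph V E"
  define A where "A = {x. (x, a) \<in> E\<^sup>* \<or> (x, b) \<in> E\<^sup>*}"
  have w: "walk ?D w" "set w \<subseteq> V" "hd w = a" "last w = b"
     "\<And>i. 0 < i \<and> Suc i < length w \<Longrightarrow> w!i \<notin> Ob \<or> collider ?D w i"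
     "\<And>i. collider ?D w i \<Longrightarrow> w!i \<in> A"
    using less.prems unfolding pre_ind_def A_def by auto
  have ne: "w \<noteq> []" using w(1) unfolding walk_def by auto
  have wA: "w!k \<in> A" if "k < length w" for k
  proof (rule anc_all[OF w(1) _ _ w(6) _ that])
    show "hd w \<in> A" "last w \<in> A" using w(3,4) by (auto simp: A_def)
    show "\<And>x y. (x, y) \<in> dedges ?D \<Longrightarrow> y \<in> A \<Longrightarrow> x \<in> A"
      by (auto simp: A_def intro: converse_rtrancl_into_rtrancl)
  qed
  show ?case
  proof (cases "distinct w")
    case True
    have "inducing_path V E Ob a b w"
      unfolding inducing_path_def is_path_def
      using True w ne less.prems unfolding walk_def pre_ind_def by auto
    then show ?thesis by blast
  next
    case False
    then obtain i j where ij: "i < j" "j < length w" "w!i = w!j"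
      unfolding distinct_conv_nth by (metis linorder_neqE_nat)
    define q where "q = take i w @ drop j w"
    have lq: "length q = i + (length w - j)" using ij by (simp add: q_def)
    have qn: "q!k = w!(if k < i then k else k + (j - i))" if "k < length q" for k
    proof (cases "k < i")
      case False
      hence "j + (k - i) = k + (j - i)" using ij by auto
      then show ?thesis using that ij lq False by (auto simp: q_def nth_append)
    qed (use that ij in \<open>auto simp: q_def nth_append\<close>)
    have qn1: "q!k = w!k" if "k < i" for k using qn[of k] that lq by auto
    have qn2: "q!k = w!(k + (j - i))" if "i \<le> k" "k < length q" for k using qn[of k] that by auto
    have qi: "q!i = w!i" using qn2[of i] lq ij by auto
    have qA: "q!k \<in> A" if "k < length q" for k
      using qn[OF that] wA that lq ij by auto
    have "pre_ind V E Ob a b q"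
      unfolding pre_ind_def
    proof (intro conjI allI impI)
      show "walk ?D q" unfolding walk_def
      proof (intro conjI allI impI)
        show "q \<noteq> []" using lq ij by auto
      next
        fix k assume k: "Suc k < length q"
        have wa: "\<And>k. Suc k < length w \<Longrightarrow> adj ?D (w!k) (w!Suc k)" using w(1) unfolding walk_def by blast
        show "adj ?D (q!k) (q!Suc k)"
        proof (cases "Suc k < i")
          case True then show ?thesis using qn1[of k] qn1[of "Suc k"] wa[of k] ij by auto
        next
          case False
          show ?thesis
          proof (cases "Suc k = i")
            case True
            then show ?thesis using qn1[of k] qi wa[of k] ij by auto
          next
            case False
            hence "i \<le> k" using \<open>\<not> Suc k < i\<close> by auto
            then show ?thesis using qn2[of k] qn2[of "Suc k"] k wa[of "k + (j - i)"] lq ij by auto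
          qed
        qed
      qed
    next
      show "set q \<subseteq> V" using w(2) unfolding q_def by (auto dest: in_set_takeD in_set_dropD)
    next
      show "hd q = a"
      proof -
        have "q \<noteq> []" using lq ij by auto
        hence "hd q = q!0" by (simp add: hd_conv_nth)
        also have "\<dots> = w!0" using qn[of 0] lq ij by (cases "i = 0") auto
        finally show ?thesis using w(3) ne by (simp add: hd_conv_nth)
      qed
    next
      show "last q = b"
      proof -
        have "q \<noteq> []" using lq ij by auto
        hence "last q = q!(length q - 1)" by (simp add: last_conv_nth)
        also have "\<dots> = w!(length w - 1)" using qn2[of "length q - 1"] lq ij by auto
        finally show ?thesis using w(4) ne by (simp add: last_conv_nth)
      qed
    next
      fix k assume "collider ?D q k"
      hence "k < length q" unfolding collider_def by auto
      then show "(q!k, a) \<in> E\<^sup>* \<or> (q!k, b) \<in> E\<^sup>*" using qA A_def by auto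
    next
      fix k assume k: "0 < k \<and> Suc k < length q"
      show "q!k \<notin> Ob \<or> collider ?D q k"
      proof (cases "k < i")
        case True
        have "collider ?D q k \<longleftrightarrow> collider ?D w k"
        proof (rule collider_eqI)
          show "q!Suc k = w!Suc k"
            using True qn1[of "Suc k"] qi by (cases "Suc k = i") auto
          show "q!(k-1) = w!(k-1)" using qn1[of "k-1"] True by auto
          show "q!k = w!k" using qn1[of k] True by auto
        qed (use k True ij in auto)
        then show ?thesis using w(5)[of k] k True ij qn1[of k] by auto
      next
        case False
        show ?thesis
        proof (cases "k = i")
          case False
          hence ik: "i < k" using \<open>\<not> k < i\<close> by auto
          have "collider ?D q k \<longleftrightarrow> collider ?D w (k + (j - i))"
          proof (rule collider_eqI)
            show "q!(k-1) = w!(k + (j - i) - 1)" using qn2[of "k-1"] ik k by auto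
            show "q!k = w!(k + (j - i))" using qn2[of k] ik k by auto
            have "q!Suc k = w!(Suc k + (j - i))" using qn2[of "Suc k"] ik k by auto
            then show "q!Suc k = w!Suc (k + (j - i))" by simp
          qed (use k ik ij lq in auto)
          then show ?thesis using w(5)[of "k + (j - i)"] k ik ij lq qn2[of k] by auto
        next
          case True
          show ?thesis
          proof (cases "q!k \<in> Ob")
            case qO: True
            have c1: "collider ?D w i" using w(5)[of i] qO True qi k ij by auto
            have c2: "collider ?D w j" using w(5)[of j] qO True qi k ij lq by auto
            have "q!(k-1) = w!(i-1)" using qn1[of "k-1"] True k by auto
            moreover have "q!Suc k = w!Suc j" using qn2[of "Suc k"] True k ij by auto
            ultimately show ?thesis using c1 c2 True k qi ij unfolding collider_D by auto
          qed simp
        qed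
      qed
    qed
    moreover have "length q < length w" using lq ij by auto
    ultimately show ?thesis using less.hyps by blast
  qed
qed



lemma mag_simps[simp]:
  "verts (mag_of V E Ob) = Ob"
  "dedges (mag_of V E Ob) = {(a,b). a \<in> Ob \<and> b \<in> Ob \<and> a \<noteq> b \<and> (\<exists>p. inducing_path V E Ob a b p) \<and> (a,b) \<in> E\<^sup>*}"
  "bedges (mag_of V E Ob) = {(a,b). a \<in> Ob \<and> b \<in> Ob \<and> a \<noteq> b \<and> (\<exists>p. inducing_path V E Ob a b p) \<and>
                      (a,b) \<notin> E\<^sup>* \<and> (b,a) \<notin> E\<^sup>*}"
  by (simp_all add: mag_of_def)

lemma dedges_M_E: "(x,y) \<in> dedges (mag_of V E Ob) \<Longrightarrow> (x,y) \<in> E\<^sup>+"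
proof -
  assume "(x,y) \<in> dedges (mag_of V E Ob)"
  hence "(x,y) \<in> E\<^sup>*" "x \<noteq> y" by auto
  then show ?thesis using rtranclD by metis
qed

lemma dedgesM_trancl: "(x,y) \<in> (dedges (mag_of V E Ob))\<^sup>+ \<Longrightarrow> (x,y) \<in> E\<^sup>+"
proof (induction rule: trancl_induct)
  case (base y) then show ?case by (rule dedges_M_E)
next
  case (step y z) then show ?case using dedges_M_E[of y z V E Ob] by (meson trancl_trans)
qed

lemma dedgesM_rtrancl: "(x,y) \<in> (dedges (mag_of V E Ob))\<^sup>* \<Longrightarrow> (x,y) \<in> E\<^sup>*"
  by (metis dedgesM_trancl rtrancl_eq_or_trancl)

lemma into_M_notE: "dag V E \<Longrightarrow> into (mag_of V E Ob) x y \<Longrightarrow> (y,x) \<notin> E\<^sup>*"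
proof
  assume d: "dag V E" and i: "into (mag_of V E Ob) x y" and yx: "(y,x) \<in> E\<^sup>*"
  from i have "(x,y) \<in> dedges (mag_of V E Ob) \<or> (x,y) \<in> bedges (mag_of V E Ob) \<or> (y,x) \<in> bedges (mag_of V E Ob)"
    unfolding into_def by blast
  then show False
  proof (elim disjE)
    assume "(x,y) \<in> dedges (mag_of V E Ob)"
    hence "(x,y) \<in> E\<^sup>+" by (rule dedges_M_E)
    then show False using dag_acyc[OF d] yx by blast
  qed (use yx in auto)
qed

lemma adj_M_inducing:
  assumes "adj (mag_of V E Ob) u v"
  shows "u \<noteq> v \<and> (\<exists>p. inducing_path V E Ob u v p)"
proof -
  have "(u,v) \<in> dedges (mag_of V E Ob) \<or> (v,u) \<in> dedges (mag_of V E Ob) \<or> (u,v) \<in> bedges (mag_of V E Ob) \<or> (v,u) \<in> bedges (mag_of V E Ob)"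
    using assms unfolding adj_def by blast
  then show ?thesis
  proof (elim disjE)
    assume "(v,u) \<in> dedges (mag_of V E Ob)"
    then obtain p where "inducing_path V E Ob v u p" "v \<noteq> u" by auto
    then show ?thesis using inducing_rev by metis
  next
    assume "(v,u) \<in> bedges (mag_of V E Ob)"
    then obtain p where "inducing_path V E Ob v u p" "v \<noteq> u" by auto
    then show ?thesis using inducing_rev by metis
  qed auto
qed

lemma inducing_adj:
  assumes "a \<in> Ob" "b \<in> Ob" "a \<noteq> b" "inducing_path V E Ob a b p"
  shows "adj (mag_of V E Ob) a b"
proof -
  have r: "inducing_path V E Ob b a (rev p)" using assms(4) by (rule inducing_rev)
  show ?thesis
  proof (cases "(a,b) \<in> E\<^sup>*")
    case True
    then show ?thesis using assms unfolding adj_def by auto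
  next
    case F: False
    show ?thesis
    proof (cases "(b,a) \<in> E\<^sup>*")
      case True
      then show ?thesis using assms r unfolding adj_def by auto
    next
      case False
      then show ?thesis using assms F unfolding adj_def by auto
    qed
  qed
qed

lemma walk_set:
  assumes "walk (dag_graph V E) w" "2 \<le> length w" "E \<subseteq> V \<times> V"
  shows "set w \<subseteq> V"
proof
  fix x assume "x \<in> set w"
  then obtain i where i: "i < length w" "w!i = x" by (auto simp: in_set_conv_nth)
  show "x \<in> V"
  proof (cases "Suc i < length w")
    case True
    then show ?thesis using assms i unfolding walk_def by auto
  next
    case False
    hence "Suc (i - 1) < length w" "Suc (i - 1) = i" using assms(2) i by auto
    then show ?thesis using assms i unfolding walk_def by (metis adj_dg mem_Sigma_iff subsetD)
  qed
qed

lemma cat_nth1: "i < length w \<Longrightarrow> (w @ tl p)!i = w!i"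
  by (simp add: nth_append)

lemma cat_nth2:
  assumes "w \<noteq> []" "p \<noteq> []" "hd p = last w" "length w - 1 \<le> i" "i < length w + length p - 1"
  shows "(w @ tl p)!i = p!(i - (length w - 1))"
proof (cases "i = length w - 1")
  case True
  then show ?thesis using assms by (simp add: nth_append last_conv_nth hd_conv_nth)
next
  case False
  hence "length w \<le> i" using assms by auto
  moreover have "i - (length w - 1) = Suc (i - length w)" using calculation assms(1) by (cases w) auto
  ultimately show ?thesis using assms by (simp add: nth_append nth_tl)
qed



lemma chain:
  assumes dag: "dag V E" and ob: "Ob \<subseteq> V"
    and p: "is_path (mag_of V E Ob) p"
    and col: "\<forall>i. 0 < i \<and> Suc i < length p \<longrightarrow> collider (mag_of V E Ob) p i"
    and pA: "set p \<subseteq> A" and cl: "\<forall>x y. (x,y) \<in> E \<longrightarrow> y \<in> A \<longrightarrow> x \<in> A"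
  shows "0 < k \<Longrightarrow> k < length p \<Longrightarrow> \<exists>w. walk (dag_graph V E) w \<and> 2 \<le> length w \<and> hd w = hd p \<and> last w = p!k \<and>
     (\<forall>i. 0 < i \<and> Suc i < length w \<longrightarrow> w!i \<notin> Ob \<or> collider (dag_graph V E) w i) \<and>
     (\<forall>i. collider (dag_graph V E) w i \<longrightarrow> w!i \<in> A) \<and>
     ((p!k, p!(k-1)) \<notin> E\<^sup>* \<longrightarrow> (w!(length w - 2), last w) \<in> E)"
proof (induction k)
  case 0 then show ?case by simp
next
  case (Suc k)
  let ?D = "dag_graph V E"
  let ?M = "mag_of V E Ob"
  have pd: "distinct p" "set p \<subseteq> Ob" "\<And>i. Suc i < length p \<Longrightarrow> adj ?M (p!i) (p!Suc i)"
    using p unfolding is_path_def by auto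
  have cA: "x \<in> A" if "(x,y) \<in> E\<^sup>*" "y \<in> A" for x y
    using rtrancl_closed[OF that] cl by blast
  have pkA: "p!i \<in> A" if "i < length p" for i using pA that by auto
  obtain \<pi> where \<pi>: "inducing_path V E Ob (p!k) (p!Suc k) \<pi>" and ne: "p!k \<noteq> p!Suc k"
    using adj_M_inducing[OF pd(3)[of k]] Suc.prems by auto
  have l\<pi>: "2 \<le> length \<pi>" using inducing_len[OF \<pi> ne] .
  have \<pi>p: "walk ?D \<pi>" "hd \<pi> = p!k" "last \<pi> = p!Suc k"
    "\<And>i. 0 < i \<and> Suc i < length \<pi> \<Longrightarrow> \<pi>!i \<notin> Ob \<or> collider ?D \<pi> i"
    "\<And>i. collider ?D \<pi> i \<Longrightarrow> \<pi>!i \<in> A"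
  proof -
    show "walk ?D \<pi>" "hd \<pi> = p!k" "last \<pi> = p!Suc k"
      "\<And>i. 0 < i \<and> Suc i < length \<pi> \<Longrightarrow> \<pi>!i \<notin> Ob \<or> collider ?D \<pi> i"
      using \<pi> unfolding inducing_path_def by (auto intro: path_walk)
    fix i assume "collider ?D \<pi> i"
    hence "(\<pi>!i, p!k) \<in> E\<^sup>* \<or> (\<pi>!i, p!Suc k) \<in> E\<^sup>*" using \<pi> unfolding inducing_path_def by auto
    then show "\<pi>!i \<in> A" using cA pkA Suc.prems by auto
  qed
  have lastpi: "(\<pi>!(length \<pi> - 2), last \<pi>) \<in> E" if "(p!Suc k, p!k) \<notin> E\<^sup>*"
  proof -
    have "\<pi> \<noteq> []" using l\<pi> by auto
    then show ?thesis using inducing_into_last[OF dag \<pi> ne] \<pi>p(3) that by (simp add: last_conv_nth)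
  qed
  show ?case
  proof (cases "k = 0")
    case True
    show ?thesis
      using \<pi>p l\<pi> lastpi True p unfolding is_path_def by (intro exI[of _ \<pi>]) (auto simp: hd_conv_nth)
  next
    case False
    obtain w where w: "walk ?D w" "2 \<le> length w" "hd w = hd p" "last w = p!k"
      "\<And>i. 0 < i \<and> Suc i < length w \<Longrightarrow> w!i \<notin> Ob \<or> collider ?D w i"
      "\<And>i. collider ?D w i \<Longrightarrow> w!i \<in> A"
      "(p!k, p!(k-1)) \<notin> E\<^sup>* \<Longrightarrow> (w!(length w - 2), last w) \<in> E"
      using Suc.IH False Suc.prems by auto
    have ck: "collider ?M p k" using col False Suc.prems by auto
    hence "into ?M (p!(k-1)) (p!k)" "into ?M (p!Suc k) (p!k)" unfolding collider_def by auto
    hence n1: "(p!k, p!(k-1)) \<notin> E\<^sup>*" and n2: "(p!k, p!Suc k) \<notin> E\<^sup>*" using into_M_notE[OF dag] by auto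
    have wl: "(w!(length w - 2), p!k) \<in> E" using w(7)[OF n1] w(4) by simp
    have pf: "(\<pi>!1, \<pi>!0) \<in> E" using inducing_into_first[OF dag \<pi> ne n2] .
    have pi0: "\<pi>!0 = p!k" using \<pi>p(2) l\<pi> by (metis hd_conv_nth list.size(3) not_numeral_le_zero)
    define n where "n = length w"
    define l where "l = length \<pi>"
    define w' where "w' = w @ tl \<pi>"
    have wne: "w \<noteq> []" and pne: "\<pi> \<noteq> []" using w(2) l\<pi> by auto
    have hdl: "hd \<pi> = last w" using \<pi>p(2) w(4) by simp
    have lw': "length w' = n + l - 1" using l\<pi> by (simp add: w'_def n_def l_def)
    have n1': "\<And>i. i < n \<Longrightarrow> w'!i = w!i" unfolding w'_def n_def by (rule cat_nth1)
    have n2': "\<And>i. n - 1 \<le> i \<Longrightarrow> i < n + l - 1 \<Longrightarrow> w'!i = \<pi>!(i - (n - 1))"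
      unfolding w'_def n_def l_def by (rule cat_nth2[OF wne pne hdl])
    have wa: "\<And>i. Suc i < n \<Longrightarrow> adj ?D (w!i) (w!Suc i)" using w(1) unfolding walk_def n_def by blast
    have pa: "\<And>i. Suc i < l \<Longrightarrow> adj ?D (\<pi>!i) (\<pi>!Suc i)" using \<pi>p(1) unfolding walk_def l_def by blast
    have wn1: "w!(n-1) = p!k" using w(4) wne by (simp add: last_conv_nth n_def)
    have "walk ?D w'" unfolding walk_def
    proof (intro conjI allI impI)
      show "w' \<noteq> []" using wne by (simp add: w'_def)
    next
      fix i assume i: "Suc i < length w'"
      show "adj ?D (w'!i) (w'!Suc i)"
      proof (cases "Suc i < n")
        case True then show ?thesis using n1'[of i] n1'[of "Suc i"] wa[of i] by auto
      next
        case False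
        hence "w'!i = \<pi>!(i - (n - 1))" "w'!Suc i = \<pi>!Suc (i - (n - 1))" "Suc (i - (n - 1)) < l"
          using n2'[of i] n2'[of "Suc i"] i lw' w(2) unfolding n_def by (auto simp: Suc_diff_le)
        then show ?thesis using pa by auto
      qed
    qed
    moreover have "2 \<le> length w'" using lw' w(2) l\<pi> unfolding n_def l_def by auto
    moreover have "hd w' = hd p" using w(3) wne by (simp add: w'_def)
    moreover have "last w' = p!Suc k"
    proof -
      have "tl \<pi> \<noteq> []" using l\<pi> by (cases \<pi>) auto
      then show ?thesis using \<pi>p(3) pne by (simp add: w'_def last_tl)
    qed
    moreover have cw: "(0 < i \<and> Suc i < length w' \<longrightarrow> w'!i \<notin> Ob \<or> collider ?D w' i) \<and>
                       (collider ?D w' i \<longrightarrow> w'!i \<in> A)" for i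
    proof (cases "i < n - 1")
      case True
      have eq: "collider ?D w' i \<longleftrightarrow> collider ?D w i" if "0 < i"
        by (rule collider_eqI) (use that True n1' lw' l\<pi> in \<open>auto simp: n_def l_def\<close>)
      have "collider ?D w' i \<Longrightarrow> 0 < i" unfolding collider_def by auto
      then show ?thesis using eq w(5)[of i] w(6)[of i] True n1'[of i] unfolding n_def by auto
    next
      case False
      show ?thesis
      proof (cases "i = n - 1")
        case True
        have "w'!i = p!k" using n1'[of i] True wn1 w(2) unfolding n_def by auto
        moreover have "p!k \<in> A" using pkA Suc.prems by auto
        moreover have "collider ?D w' i"
        proof -
          have "w'!(i-1) = w!(n-2)" using n1'[of "i-1"] True w(2) unfolding n_def by (auto simp: numeral_2_eq_2)
          moreover have "w'!Suc i = \<pi>!1"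
          proof -
            have "Suc i - (n - 1) = 1" using True w(2) unfolding n_def by auto
            then show ?thesis using n2'[of "Suc i"] True w(2) l\<pi> unfolding n_def l_def by auto
          qed
          moreover have "w'!i = \<pi>!0" using n2'[of i] True w(2) l\<pi> unfolding n_def l_def by auto
          moreover have "0 < i" "Suc i < length w'" using True w(2) l\<pi> lw' unfolding n_def l_def by auto
          ultimately show ?thesis unfolding collider_D using wl pf pi0 wn1 n_def by auto
        qed
        ultimately show ?thesis by auto
      next
        case False
        hence gi: "n - 1 < i" using \<open>\<not> i < n - 1\<close> by auto
        show ?thesis
        proof (cases "Suc i < length w'")
          case True
          have eq: "collider ?D w' i \<longleftrightarrow> collider ?D \<pi> (i - (n - 1))"
          proof (rule collider_eqI)
            show "w'!(i-1) = \<pi>!(i - (n - 1) - 1)" using n2'[of "i-1"] gi True lw' by auto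
            show "w'!i = \<pi>!(i - (n - 1))" using n2'[of i] gi True lw' by auto
            show "w'!Suc i = \<pi>!Suc (i - (n - 1))" using n2'[of "Suc i"] gi True lw' by (auto simp: Suc_diff_le)
          qed (use gi True lw' in \<open>auto simp: l_def\<close>)
          moreover have "w'!i = \<pi>!(i - (n - 1))" using n2'[of i] gi True lw' by auto
          moreover have "0 < i - (n - 1) \<and> Suc (i - (n - 1)) < length \<pi>" using gi True lw' by (auto simp: l_def)
          ultimately show ?thesis using \<pi>p(4)[of "i - (n - 1)"] \<pi>p(5)[of "i - (n - 1)"] by auto
        next
          case False
          then show ?thesis unfolding collider_def by auto
        qed
      qed
    qed
    moreover have "(p!Suc k, p!(Suc k - 1)) \<notin> E\<^sup>* \<longrightarrow> (w'!(length w' - 2), last w') \<in> E"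
    proof
      assume "(p!Suc k, p!(Suc k - 1)) \<notin> E\<^sup>*"
      hence e: "(\<pi>!(l - 2), \<pi>!(l - 1)) \<in> E" using lastpi pne by (simp add: last_conv_nth l_def)
      have "length w' - 2 - (n - 1) = l - 2" "n - 1 \<le> length w' - 2" "length w' - 2 < n + l - 1"
        using lw' l\<pi> w(2) unfolding n_def l_def by auto
      hence "w'!(length w' - 2) = \<pi>!(l - 2)" using n2'[of "length w' - 2"] by metis
      moreover have "last w' = \<pi>!(l - 1)" using \<open>last w' = p!Suc k\<close> \<pi>p(3) pne by (simp add: last_conv_nth l_def)
      ultimately show "(w'!(length w' - 2), last w') \<in> E" using e by simp
    qed
    ultimately show ?thesis by blast
  qed
qed



lemma maximal:
  assumes dag: "dag V E" and ob: "Ob \<subseteq> V" and ab: "a \<in> Ob" "b \<in> Ob" "a \<noteq> b"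
    and na: "\<not> adj (mag_of V E Ob) a b"
  shows "\<exists>Z \<subseteq> Ob - {a,b}. msep (mag_of V E Ob) a b Z"
proof -
  let ?M = "mag_of V E Ob"
  let ?D = "dag_graph V E"
  define A where "A = {x. (x, a) \<in> E\<^sup>* \<or> (x, b) \<in> E\<^sup>*}"
  define Z0 where "Z0 = {z \<in> Ob. z \<noteq> a \<and> z \<noteq> b \<and> z \<in> A}"
  have clA: "x \<in> A" if "(x,y) \<in> E\<^sup>*" "y \<in> A" for x y
    using that rtrancl_trans[of x y E] unfolding A_def by blast
  have "msep ?M a b Z0"
    unfolding msep_def
  proof
    assume "\<exists>p. m_connecting ?M Z0 p \<and> hd p = a \<and> last p = b"
    then obtain p where p: "m_connecting ?M Z0 p" "hd p = a" "last p = b" by blast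
    have pp: "is_path ?M p" using p(1) unfolding m_connecting_def by auto
    have ne: "p \<noteq> []" and dp: "distinct p" and sp: "set p \<subseteq> Ob" using pp unfolding is_path_def by auto
    have mc: "\<And>i. 0 < i \<and> Suc i < length p \<Longrightarrow> (collider ?M p i \<longrightarrow> (\<exists>z\<in>Z0. anc ?M (p!i) z)) \<and>
        (\<not> collider ?M p i \<longrightarrow> p!i \<notin> Z0)"
      using p(1) unfolding m_connecting_def by blast
    have pA: "p!i \<in> A" if "i < length p" for i
    proof (rule anc_all[OF path_walk[OF pp] _ _ _ _ that])
      show "hd p \<in> A" "last p \<in> A" using p(2,3) by (auto simp: A_def)
    next
      fix i assume c: "collider ?M p i"
      hence "0 < i \<and> Suc i < length p" unfolding collider_def by auto
      then obtain z where "z \<in> Z0" "anc ?M (p!i) z" using mc c by blast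
      then have "(p!i, z) \<in> E\<^sup>*" "z \<in> A" unfolding anc_def Z0_def by (auto intro: dedgesM_rtrancl)
      then show "p!i \<in> A" by (rule clA)
    next
      fix x y assume "(x, y) \<in> dedges ?M" "y \<in> A"
      then have "(x,y) \<in> E\<^sup>*" "y \<in> A" using dedges_M_E[of x y V E Ob] by auto
      then show "x \<in> A" by (rule clA)
    qed
    have len: "2 \<le> length p"
    proof (rule ccontr)
      assume "\<not> 2 \<le> length p"
      then obtain c where "p = [c]" using ne by (cases p; cases "tl p") auto
      then show False using p(2,3) ab by auto
    qed
    have p0: "p!0 = a" and pl: "p!(length p - 1) = b" using p(2,3) ne by (auto simp: hd_conv_nth last_conv_nth)
    have col: "\<forall>i. 0 < i \<and> Suc i < length p \<longrightarrow> collider ?M p i"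
    proof (intro allI impI)
      fix i assume i: "0 < i \<and> Suc i < length p"
      show "collider ?M p i"
      proof (rule ccontr)
        assume "\<not> collider ?M p i"
        hence "p!i \<notin> Z0" using mc i by blast
        moreover have "p!i \<noteq> a" using p0 i nth_eq_iff_index_eq[OF dp, of i 0] by fastforce
        moreover have "p!i \<noteq> b" using pl i nth_eq_iff_index_eq[OF dp, of i "length p - 1"] by fastforce
        moreover have "p!i \<in> Ob" using sp i by auto
        ultimately show False using pA[of i] i unfolding Z0_def by auto
      qed
    qed
    have cl: "\<forall>x y. (x,y) \<in> E \<longrightarrow> y \<in> A \<longrightarrow> x \<in> A" using clA by blast
    have pA': "set p \<subseteq> A" using pA by (auto simp: in_set_conv_nth)
    have k: "0 < length p - 1" "length p - 1 < length p" using len by auto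
    from chain[OF dag ob pp col pA' cl k] obtain w where w: "walk ?D w" "2 \<le> length w" "hd w = hd p" "last w = p!(length p - 1)"
      "\<forall>i. 0 < i \<and> Suc i < length w \<longrightarrow> w!i \<notin> Ob \<or> collider ?D w i"
      "\<forall>i. collider ?D w i \<longrightarrow> w!i \<in> A"
      by blast
    have EV: "E \<subseteq> V \<times> V" using dag unfolding dag_def by auto
    have "pre_ind V E Ob a b w"
      unfolding pre_ind_def using w walk_set[OF w(1) w(2) EV] p(2) pl by (auto simp: A_def)
    then obtain q where "inducing_path V E Ob a b q" using shorten[OF dag] by blast
    then have "adj ?M a b" using inducing_adj ab by metis
    then show False using na by simp
  qed
  moreover have "Z0 \<subseteq> Ob - {a,b}" unfolding Z0_def by auto
  ultimately show ?thesis by blast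
qed

lemma is_mag_M:
  assumes dag: "dag V E" and ob: "Ob \<subseteq> V"
  shows "is_mag Ob (mag_of V E Ob)"
proof -
  let ?M = "mag_of V E Ob"
  have s: "sym (bedges ?M)" unfolding sym_def
  proof (intro allI impI)
    fix x y assume "(x, y) \<in> bedges ?M"
    then obtain p where "x \<in> Ob" "y \<in> Ob" "x \<noteq> y" "inducing_path V E Ob x y p" "(x,y) \<notin> E\<^sup>*" "(y,x) \<notin> E\<^sup>*"
      by auto
    then show "(y, x) \<in> bedges ?M" using inducing_rev[of V E Ob x y p] by auto
  qed
  have ac: "(a, a) \<notin> (dedges ?M)\<^sup>+" for a
    using dedgesM_trancl[of a a V E Ob] dag unfolding dag_def by blast
  have an: "\<not> anc ?M a b" if "(a, b) \<in> bedges ?M" for a b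
  proof
    assume "anc ?M a b"
    hence "(a,b) \<in> E\<^sup>*" unfolding anc_def by (rule dedgesM_rtrancl)
    then show False using that by simp
  qed
  have mx: "\<exists>Z\<subseteq>Ob - {a, b}. msep ?M a b Z" if "a \<in> Ob" "b \<in> Ob" "a \<noteq> b" "\<not> adj ?M a b" for a b
    using maximal[OF dag ob that] .
  have d: "dedges ?M \<subseteq> Ob \<times> Ob" "bedges ?M \<subseteq> Ob \<times> Ob" by auto
  have i: "\<forall>a. (a,a) \<notin> bedges ?M" by simp
  have di: "\<forall>a b. (a,b) \<in> dedges ?M \<longrightarrow> (a,b) \<notin> bedges ?M" by simp
  show ?thesis unfolding is_mag_def using s ac an mx d i di by simp
qed

lemma M_in_mec: "dag V E \<Longrightarrow> Ob \<subseteq> V \<Longrightarrow> mag_of V E Ob \<in> mec Ob (mag_of V E Ob)"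
  unfolding mec_def markov_equiv_def using is_mag_M by blast

lemma poss_step_M:
  assumes dag: "dag V E" and ob: "Ob \<subseteq> V" and e: "(x,y) \<in> dedges (mag_of V E Ob)"
  shows "poss_step (pag_of V E Ob) x y"
proof -
  let ?M = "mag_of V E Ob"
  have a1: "adj ?M x y" "adj ?M y x" using e unfolding adj_def by auto
  have "(x,y) \<in> E\<^sup>*" using dedges_M_E[OF e] by auto
  hence ni: "\<not> into ?M y x" using into_M_notE[OF dag] by blast
  have "\<not> (\<forall>H\<in>mec Ob ?M. into H y x)" using ni M_in_mec[OF dag ob] by blast
  then show ?thesis unfolding poss_step_def pag_of_def Let_def using a1 by auto
qed

lemma poss_de_M:
  assumes dag: "dag V E" and ob: "Ob \<subseteq> V" and r: "(x,y) \<in> (dedges (mag_of V E Ob))\<^sup>*"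
  shows "y \<in> poss_de (pag_of V E Ob) x"
  using r unfolding poss_de_def
proof (induction rule: rtrancl_induct)
  case (step y z)
  then show ?case using poss_step_M[OF dag ob step(2)] by (simp add: rtrancl_into_rtrancl)
qed simp



definition dpath :: "('v \<times> 'v) set \<Rightarrow> 'v list \<Rightarrow> bool" where
  "dpath r p \<longleftrightarrow> p \<noteq> [] \<and> (\<forall>i. Suc i < length p \<longrightarrow> (p!i, p!Suc i) \<in> r)"

lemma dpath_trancl: "dpath r p \<Longrightarrow> i < j \<Longrightarrow> j < length p \<Longrightarrow> (p!i, p!j) \<in> r\<^sup>+"
proof (induction j)
  case 0 then show ?case by simp
next
  case (Suc j)
  have e: "(p!j, p!Suc j) \<in> r" using Suc.prems unfolding dpath_def by auto
  show ?case
  proof (cases "i = j")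
    case True then show ?thesis using e by auto
  next
    case False then show ?thesis using Suc e by (meson less_SucE Suc_lessD trancl.trancl_into_trancl)
  qed
qed

lemma dpath_distinct: "dpath r p \<Longrightarrow> (\<forall>a. (a,a) \<notin> r\<^sup>+) \<Longrightarrow> distinct p"
  unfolding distinct_conv_nth
  by (metis dpath_trancl linorder_neqE_nat)

lemma dpath_Cons: "dpath r p \<Longrightarrow> (x, hd p) \<in> r \<Longrightarrow> dpath r (x # p)"
  unfolding dpath_def
proof (intro conjI allI impI; (elim conjE)?)
  fix i assume a: "p \<noteq> []" "\<forall>i. Suc i < length p \<longrightarrow> (p ! i, p ! Suc i) \<in> r" "(x, hd p) \<in> r"
    "Suc i < length (x # p)"
  show "((x # p) ! i, (x # p) ! Suc i) \<in> r"
  proof (cases i)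
    case 0 then show ?thesis using a by (simp add: hd_conv_nth)
  next
    case (Suc k) then show ?thesis using a by auto
  qed
qed simp

lemma trancl_dpath: "(x,y) \<in> r\<^sup>+ \<Longrightarrow> \<exists>p. dpath r p \<and> hd p = x \<and> last p = y \<and> 2 \<le> length p"
proof (induction rule: converse_trancl_induct)
  case (base x)
  then show ?case by (intro exI[of _ "[x,y]"]) (auto simp: dpath_def less_Suc_eq)
next
  case (step x z)
  then obtain p where p: "dpath r p" "hd p = z" "last p = y" "2 \<le> length p" by blast
  have "dpath r (x # p)" using p step(1) by (intro dpath_Cons) auto
  then show ?case using p by (intro exI[of _ "x # p"]) auto
qed

lemma dpath_inducing:
  assumes dag: "dag V E" and dp: "dpath E p" and len: "2 \<le> length p"
    and lat: "\<forall>i. 0 < i \<and> Suc i < length p \<longrightarrow> p!i \<notin> Ob"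
  shows "inducing_path V E Ob (hd p) (last p) p \<and> (hd p, last p) \<in> E\<^sup>+"
proof -
  have ac: "\<forall>a. (a,a) \<notin> E\<^sup>+" using dag unfolding dag_def by auto
  have EV: "E \<subseteq> V \<times> V" using dag unfolding dag_def by auto
  have ne: "p \<noteq> []" using len by auto
  have tr: "(hd p, last p) \<in> E\<^sup>+" using dpath_trancl[OF dp, of 0 "length p - 1"] len ne
    by (simp add: hd_conv_nth last_conv_nth)
  have w: "walk (dag_graph V E) p" using dp unfolding walk_def dpath_def by auto
  have sV: "set p \<subseteq> V" using walk_set[OF w len EV] .
  have nc: "\<not> collider (dag_graph V E) p i" for i
  proof
    assume c: "collider (dag_graph V E) p i"
    hence "(p!Suc i, p!i) \<in> E" "(p!i, p!Suc i) \<in> E" using dp unfolding collider_D dpath_def by auto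
    then show False using ac by (meson r_into_trancl trancl_into_trancl)
  qed
  have "is_path (dag_graph V E) p" unfolding is_path_def
    using ne dpath_distinct[OF dp ac] sV dp unfolding dpath_def by auto
  then show ?thesis using tr lat nc unfolding inducing_path_def by auto
qed

lemma lat_dec:
  assumes dag: "dag V E" and ob: "Ob \<subseteq> V"
  shows "(x,y) \<in> E\<^sup>+ \<Longrightarrow> y \<in> Ob \<Longrightarrow> \<exists>u p. u \<in> Ob \<and> dpath E p \<and> 2 \<le> length p \<and> hd p = x \<and> last p = u \<and>
     (\<forall>i. 0 < i \<and> Suc i < length p \<longrightarrow> p!i \<notin> Ob) \<and> (u,y) \<in> (dedges (mag_of V E Ob))\<^sup>*"
proof (induction rule: converse_trancl_induct)
  case (base x)
  then show ?case by (intro exI[of _ y] exI[of _ "[x,y]"]) (auto simp: dpath_def less_Suc_eq)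
next
  case (step x z)
  then obtain u p where p: "u \<in> Ob" "dpath E p" "2 \<le> length p" "hd p = z" "last p = u"
     "\<forall>i. 0 < i \<and> Suc i < length p \<longrightarrow> p!i \<notin> Ob" "(u,y) \<in> (dedges (mag_of V E Ob))\<^sup>*" by blast
  have ne: "p \<noteq> []" using p(3) by auto
  show ?case
  proof (cases "z \<in> Ob")
    case True
    have ip: "inducing_path V E Ob z u p" "(z,u) \<in> E\<^sup>+" using dpath_inducing[OF dag p(2,3,6)] p(4,5) by auto
    have "z \<noteq> u" using ip(2) dag unfolding dag_def by auto
    hence "(z,u) \<in> dedges (mag_of V E Ob)" using ip True p(1) by auto
    hence "(z,y) \<in> (dedges (mag_of V E Ob))\<^sup>*" using p(7) by (meson converse_rtrancl_into_rtrancl)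
    then show ?thesis using True step(1)
      by (intro exI[of _ z] exI[of _ "[x,z]"]) (auto simp: dpath_def less_Suc_eq)
  next
    case False
    have "dpath E (x # p)" using p(2) step(1) p(4) by (intro dpath_Cons) auto
    moreover have "\<forall>i. 0 < i \<and> Suc i < length (x # p) \<longrightarrow> (x # p)!i \<notin> Ob"
    proof (intro allI impI)
      fix i assume i: "0 < i \<and> Suc i < length (x # p)"
      then obtain k where k: "i = Suc k" by (cases i) auto
      show "(x # p)!i \<notin> Ob"
      proof (cases "k = 0")
        case True then show ?thesis using k False p(4) ne by (simp add: hd_conv_nth)
      next
        case False then show ?thesis using k p(6) i by auto
      qed
    qed
    ultimately show ?thesis using p ne by (intro exI[of _ u] exI[of _ "x # p"]) auto
  qed
qed

lemma E_to_M:
  assumes dag: "dag V E" and ob: "Ob \<subseteq> V" and xy: "(x,y) \<in> E\<^sup>+" and "x \<in> Ob" "y \<in> Ob"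
  shows "(x,y) \<in> (dedges (mag_of V E Ob))\<^sup>+"
proof -
  obtain u p where p: "u \<in> Ob" "dpath E p" "2 \<le> length p" "hd p = x" "last p = u"
     "\<forall>i. 0 < i \<and> Suc i < length p \<longrightarrow> p!i \<notin> Ob" "(u,y) \<in> (dedges (mag_of V E Ob))\<^sup>*"
    using lat_dec[OF dag ob xy assms(5)] by blast
  have ip: "inducing_path V E Ob x u p" "(x,u) \<in> E\<^sup>+" using dpath_inducing[OF dag p(2,3,6)] p(4,5) by auto
  have "x \<noteq> u" using ip(2) dag unfolding dag_def by auto
  hence "(x,u) \<in> dedges (mag_of V E Ob)" using ip assms(4) p(1) by auto
  then show ?thesis using p(7) by (meson rtrancl_into_trancl2)
qed



lemma splice:
  assumes dag: "dag V E" and ob: "Ob \<subseteq> V"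
    and pi: "m_connecting (mag_of V E Ob) Z \<pi>" and lpi: "last \<pi> = hd d"
    and dp: "dpath (dedges (mag_of V E Ob)) d" and dd: "distinct d" and sd: "set d \<subseteq> Ob"
    and dZ: "\<forall>x\<in>set d. x \<notin> Z"
  shows "\<exists>q. m_connecting (mag_of V E Ob) Z q \<and> hd q = hd \<pi> \<and> last q = last d"
proof -
  let ?M = "mag_of V E Ob"
  have pp: "is_path ?M \<pi>" and hpz: "hd \<pi> \<notin> Z"
    and mc: "\<And>i. 0 < i \<and> Suc i < length \<pi> \<Longrightarrow> (collider ?M \<pi> i \<longrightarrow> (\<exists>z\<in>Z. anc ?M (\<pi>!i) z)) \<and>
        (\<not> collider ?M \<pi> i \<longrightarrow> \<pi>!i \<notin> Z)"
    using pi unfolding m_connecting_def by blast+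
  have pne: "\<pi> \<noteq> []" and pdist: "distinct \<pi>" and ps: "set \<pi> \<subseteq> Ob"
    and pa: "\<And>i. Suc i < length \<pi> \<Longrightarrow> adj ?M (\<pi>!i) (\<pi>!Suc i)"
    using pp unfolding is_path_def by auto
  have dne: "d \<noteq> []" and de: "\<And>i. Suc i < length d \<Longrightarrow> (d!i, d!Suc i) \<in> dedges ?M"
    using dp unfolding dpath_def by auto
  have dni: "\<not> into ?M (d!Suc i) (d!i)" if "Suc i < length d" for i
  proof
    assume "into ?M (d!Suc i) (d!i)"
    hence "(d!i, d!Suc i) \<notin> E\<^sup>*" using into_M_notE[OF dag] by blast
    moreover have "(d!i, d!Suc i) \<in> E\<^sup>*" by (rule trancl_into_rtrancl[OF dedges_M_E[OF de[OF that]]])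
    ultimately show False by contradiction
  qed
  define P where "P = (\<lambda>j. j < length \<pi> \<and> \<pi>!j \<in> set d)"
  have ex: "P (length \<pi> - 1)" using lpi pne dne unfolding P_def
    by (simp add: last_conv_nth hd_conv_nth)
  define j where "j = (LEAST j. P j)"
  have Pj: "P j" unfolding j_def using ex by (rule LeastI)
  have jmin: "\<And>k. P k \<Longrightarrow> j \<le> k" unfolding j_def by (rule Least_le)
  have jl: "j < length \<pi>" and "\<pi>!j \<in> set d" using Pj unfolding P_def by auto
  then obtain l where l: "l < length d" "d!l = \<pi>!j" by (auto simp: in_set_conv_nth)
  define q where "q = take (Suc j) \<pi> @ drop (Suc l) d"
  have lq: "length q = Suc j + (length d - Suc l)" using jl l by (simp add: q_def)
  have qn1: "q!k = \<pi>!k" if "k \<le> j" for k using that jl by (simp add: q_def nth_append)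
  have qn2: "q!k = d!(k - j + l)" if "j \<le> k" "k < length q" for k
  proof (cases "k = j")
    case True then show ?thesis using qn1[of k] l by simp
  next
    case False
    hence "Suc j \<le> k" using that by auto
    moreover have "Suc l + (k - Suc j) = k - j + l" using calculation by auto
    ultimately show ?thesis using that jl l lq by (simp add: q_def nth_append)
  qed
  have qne: "q \<noteq> []" using lq by auto
  have "is_path ?M q" unfolding is_path_def
  proof (intro conjI allI impI)
    show "q \<noteq> []" by (rule qne)
    show "set q \<subseteq> verts ?M" using ps sd unfolding q_def by (auto dest: in_set_takeD in_set_dropD)
    show "distinct q" unfolding q_def distinct_append
    proof (intro conjI)
      show "distinct (take (Suc j) \<pi>)" using pdist by simp
      show "distinct (drop (Suc l) d)" using dd by simp
      show "set (take (Suc j) \<pi>) \<inter> set (drop (Suc l) d) = {}"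
      proof (rule ccontr)
        assume "set (take (Suc j) \<pi>) \<inter> set (drop (Suc l) d) \<noteq> {}"
        then obtain x where x1: "x \<in> set (take (Suc j) \<pi>)" and x2: "x \<in> set (drop (Suc l) d)" by blast
        from x1 obtain k where k: "k < Suc j" "k < length \<pi>" "\<pi>!k = x" by (auto simp: in_set_conv_nth)
        from x2 obtain m where m: "m < length d - Suc l" "d!(Suc l + m) = x" using l
          by (auto simp: in_set_conv_nth)
        have "x \<in> set d" using x2 by (auto dest: in_set_dropD)
        hence "P k" using k unfolding P_def by auto
        hence "k = j" using jmin k by fastforce
        hence "d!(Suc l + m) = d!l" using k m l by simp
        moreover have "Suc l + m < length d" using m by auto
        ultimately show False using nth_eq_iff_index_eq[OF dd, of "Suc l + m" l] l by auto
      qed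
    qed
  next
    fix k assume k: "Suc k < length q"
    show "adj ?M (q!k) (q!Suc k)"
    proof (cases "Suc k \<le> j")
      case True then show ?thesis using qn1[of k] qn1[of "Suc k"] pa[of k] jl by auto
    next
      case False
      hence "q!k = d!(k - j + l)" "q!Suc k = d!Suc (k - j + l)" "Suc (k - j + l) < length d"
        using qn2[of k] qn2[of "Suc k"] k lq by (auto simp: Suc_diff_le)
      then show ?thesis using de unfolding adj_def by auto
    qed
  qed
  moreover have hq: "hd q = hd \<pi>" using qn1[of 0] qne pne by (simp add: hd_conv_nth)
  moreover have lq': "last q = last d"
  proof -
    have "last q = q!(length q - 1)" using qne by (simp add: last_conv_nth)
    also have "\<dots> = d!(length q - 1 - j + l)" using qn2[of "length q - 1"] lq by auto
    also have "length q - 1 - j + l = length d - 1" using lq l by auto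
    finally show ?thesis using dne by (simp add: last_conv_nth)
  qed
  moreover have "last d \<notin> Z" using dZ dne by auto
  moreover have "(collider ?M q k \<longrightarrow> (\<exists>z\<in>Z. anc ?M (q!k) z)) \<and> (\<not> collider ?M q k \<longrightarrow> q!k \<notin> Z)"
    if k: "0 < k \<and> Suc k < length q" for k
  proof (cases "k < j")
    case True
    have "collider ?M q k \<longleftrightarrow> collider ?M \<pi> k"
      by (rule collider_eqI) (use k True qn1 jl in auto)
    moreover have "q!k = \<pi>!k" using qn1 True by auto
    ultimately show ?thesis using mc[of k] k True jl by auto
  next
    case False
    hence "q!k = d!(k - j + l)" "q!Suc k = d!Suc (k - j + l)" "Suc (k - j + l) < length d"
      using qn2[of k] qn2[of "Suc k"] k lq by (auto simp: Suc_diff_le)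
    hence "\<not> collider ?M q k" "q!k \<in> set d" using dni unfolding collider_def by auto
    then show ?thesis using dZ by auto
  qed
  ultimately have "m_connecting ?M Z q" unfolding m_connecting_def using hpz by auto
  then show ?thesis using hq lq' by blast
qed



theorem theorem4:
  fixes V Ob :: "'v set" and E :: "('v \<times> 'v) set" and X Y S :: 'v and Z :: "'v set"
  assumes "dag V E" and "Ob \<subseteq> V" and "X \<in> Ob" and "Y \<in> Ob" and "X \<noteq> Y"
    and "Z \<subseteq> markov_blanket (mag_of V E Ob) X"
    and "Z \<inter> poss_de (pag_of V E Ob) X = {}"
    and "S \<in> markov_blanket (mag_of V E Ob) X - ({Y} \<union> pag_children (pag_of V E Ob) X)"
    and "cond_indep V E Ob X Y Z \<or> (\<not> cond_indep V E Ob S X Z \<and> cond_indep V E Ob S Y Z)"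
  shows "(X, Y) \<notin> E\<^sup>+"
proof
  assume xy: "(X, Y) \<in> E\<^sup>+"
  let ?M = "mag_of V E Ob"
  have dag: "dag V E" and ob: "Ob \<subseteq> V" by fact+
  have "(X, Y) \<in> (dedges ?M)\<^sup>+" using E_to_M[OF dag ob xy assms(3,4)] .
  from trancl_dpath[OF this] obtain d where d: "dpath (dedges ?M) d" "hd d = X" "last d = Y" "2 \<le> length d"
    by blast
  have dne: "d \<noteq> []" using d(4) by auto
  have ac: "\<forall>a. (a,a) \<notin> (dedges ?M)\<^sup>+"
  proof (intro allI notI)
    fix a assume "(a,a) \<in> (dedges ?M)\<^sup>+"
    hence "(a,a) \<in> E\<^sup>+" by (rule dedgesM_trancl)
    then show False using dag unfolding dag_def by blast
  qed
  have dd: "distinct d" using dpath_distinct[OF d(1) ac] .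
  have de: "\<And>i. Suc i < length d \<Longrightarrow> (d!i, d!Suc i) \<in> dedges ?M" using d(1) unfolding dpath_def by auto
  have sd: "set d \<subseteq> Ob"
  proof
    fix x assume "x \<in> set d"
    then obtain i where i: "i < length d" "d!i = x" by (auto simp: in_set_conv_nth)
    show "x \<in> Ob"
    proof (cases "Suc i < length d")
      case True then show ?thesis using de[of i] i by auto
    next
      case False
      hence "Suc (i - 1) < length d" "Suc (i - 1) = i" using d(4) i by auto
      then show ?thesis using de[of "i - 1"] i by auto
    qed
  qed
  have dpd: "x \<in> poss_de (pag_of V E Ob) X" if xd: "x \<in> set d" for x
  proof -
    obtain i where i: "i < length d" "d!i = x" using xd by (auto simp: in_set_conv_nth)
    have d0: "d!0 = X" using d(2) dne by (simp add: hd_conv_nth)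
    have "(X, x) \<in> (dedges ?M)\<^sup>*"
    proof (cases "i = 0")
      case True then show ?thesis using i d0 by simp
    next
      case False then show ?thesis using dpath_trancl[OF d(1), of 0 i] i d0 by auto
    qed
    then show ?thesis by (rule poss_de_M[OF dag ob])
  qed
  have dZ: "\<forall>x\<in>set d. x \<notin> Z" using dpd assms(7) by blast
  have Xd: "X \<in> set d" using d(2) dne by auto
  from assms(9) show False
  proof
    assume "cond_indep V E Ob X Y Z"
    hence ms: "msep ?M X Y Z" unfolding cond_indep_def .
    have "m_connecting ?M Z [X]" unfolding m_connecting_def is_path_def
      using assms(3) dZ Xd by auto
    then obtain q where "m_connecting ?M Z q" "hd q = X" "last q = Y"
      using splice[OF dag ob _ _ d(1) dd sd dZ, of "[X]"] d(2,3) by auto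
    then show False using ms unfolding msep_def by blast
  next
    assume "\<not> cond_indep V E Ob S X Z \<and> cond_indep V E Ob S Y Z"
    hence n1: "\<not> msep ?M S X Z" and ms: "msep ?M S Y Z" unfolding cond_indep_def by auto
    then obtain \<pi> where \<pi>: "m_connecting ?M Z \<pi>" "hd \<pi> = S" "last \<pi> = X" unfolding msep_def by blast
    then obtain q where "m_connecting ?M Z q" "hd q = S" "last q = Y"
      using splice[OF dag ob \<pi>(1) _ d(1) dd sd dZ] d(2,3) by auto
    then show False using ms unfolding msep_def by blast
  qed
qed

end
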